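(* Let $d\ge2$. For all $d$-dimensional copulas $C_1,C_2$, $$D_1(C_1,C_2)\le D_\infty(C_1,C_2)\le 2\,TV(C_1,C_2).$$ In particular, convergence with respect to $TV$ implies convergence with respect to $D_1$ and with respect to $D_\infty$.
   Context: $\mathbb{I}=[0,1]$, $\lambda^k$ is $k$-dimensional Lebesgue measure ($\lambda=\lambda^1$). For a $d$-dimensional copula $C$, $\mu_C$ is its associated probability measure on $\mathbb{I}^d$ and $K_C:\mathbb{I}\times\mathcal{B}(\mathbb{I}^{d-1})\to\mathbb{I}$ is (a version of) its Markov kernel, i.e. the regular conditional distribution of $(U_1,\dots,U_{d-1})$ given $U_d=v$ for $(U_1,\dots,U_d)\sim C$. Define $D_1(C_1,C_2)=\int_{\mathbb{I}^{d-1}}\int_{\mathbb{I}}|K_{C_1}(v,[\mathbf{0},\mathbf{u}])-K_{C_2}(v,[\mathbf{0},\mathbf{u}])|\,d\lambda(v)\,d\lambda^{d-1}(\mathbf{u})$, $D_\infty(C_1,C_2)=\sup_{\mathbf{u}\in\mathbb{I}^{d-1}}\int_{\mathbb{I}}|K_{C_1}(v,[\mathbf{0},\mathbf{u}])-K_{C_2}(v,[\mathbf{0},\mathbf{u}])|\,d\lambda(v)$, $TV(C_1,C_2)=\sup_{G\in\mathcal{B}(\mathbb{I}^d)}|\mu_{C_1}(G)-\mu_{C_2}(G)|$. *)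

theory Defs
  imports "HOL-Probability.Probability"
begin

text \<open>A d-dimensional copula (d = CARD('m) + 1 \<ge> 2) is represented by its associated
probability measure on I^d = I^(d-1) x I; a point of I^d is a pair (u, v) with
u :: real^'m the first d-1 coordinates and v the last coordinate.
Copulas correspond bijectively to Borel probability measures all of whose
one-dimensional marginals are uniform on [0,1] (C(x) = mu([0,x])).\<close>

definition uniform01 :: "real measure" where
  "uniform01 = density lborel (indicator {0..1})"

definition copula_measure :: "((real^'m::finite) \<times> real) measure \<Rightarrow> bool" where
  "copula_measure \<mu> \<longleftrightarrow> prob_space \<mu> \<and> sets \<mu> = sets borel \<and>
     (\<forall>i. distr \<mu> lborel (\<lambda>x. fst x $ i) = uniform01) \<and>
     distr \<mu> lborel snd = uniform01"

text \<open>K is (a version of) the Markov kernel of mu: the regular conditional distribution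
of the first d-1 coordinates given the last coordinate v \<in> I.\<close>

definition markov_kernel_of ::
  "((real^'m::finite) \<times> real) measure \<Rightarrow> (real \<Rightarrow> (real^'m::finite) measure) \<Rightarrow> bool" where
  "markov_kernel_of \<mu> K \<longleftrightarrow>
     (\<forall>v\<in>{0..1}. prob_space (K v) \<and> sets (K v) = sets borel) \<and>
     (\<forall>B\<in>sets borel. (\<lambda>v. measure (K v) B) \<in> borel_measurable (restrict_space borel {0..1})) \<and>
     (\<forall>B\<in>sets borel. \<forall>F\<in>sets borel. F \<subseteq> {0..1} \<longrightarrow>
        measure \<mu> (B \<times> F) = (LINT v:F|lborel. measure (K v) B))"

definition D1 :: "(real \<Rightarrow> (real^'m::finite) measure) \<Rightarrow> (real \<Rightarrow> (real^'m::finite) measure) \<Rightarrow> real" where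
  "D1 K1 K2 = (LINT u:cbox 0 1|lborel.
      (LINT v:{0..1}|lborel. \<bar>measure (K1 v) (cbox 0 u) - measure (K2 v) (cbox 0 u)\<bar>))"

definition Dinf :: "(real \<Rightarrow> (real^'m::finite) measure) \<Rightarrow> (real \<Rightarrow> (real^'m::finite) measure) \<Rightarrow> real" where
  "Dinf K1 K2 = (SUP u\<in>cbox 0 1.
      (LINT v:{0..1}|lborel. \<bar>measure (K1 v) (cbox 0 u) - measure (K2 v) (cbox 0 u)\<bar>))"

definition TV :: "((real^'m::finite) \<times> real) measure \<Rightarrow> ((real^'m::finite) \<times> real) measure \<Rightarrow> real" where
  "TV \<mu>1 \<mu>2 = (SUP G\<in>sets borel. \<bar>measure \<mu>1 G - measure \<mu>2 G\<bar>)"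

end

theory Submission imports Defs begin

lemma kernel_facts:
  fixes \<mu> :: "((real^'m::finite) \<times> real) measure" and K :: "real \<Rightarrow> (real^'m::finite) measure"
  assumes mk: "markov_kernel_of \<mu> K" and B: "B \<in> sets borel"
  shows "(\<lambda>v. indicator {0..1} v * measure (K v) B) \<in> borel_measurable lborel"
    and "\<And>v. \<bar>indicator {0..1} v * measure (K v) B\<bar> \<le> 1"
    and "\<And>F. F \<in> sets borel \<Longrightarrow> F \<subseteq> {0..1} \<Longrightarrow>
          integrable lborel (\<lambda>v. indicator F v * (indicator {0..1} v * measure (K v) B))"
    and "\<And>F. F \<in> sets borel \<Longrightarrow> F \<subseteq> {0..1} \<Longrightarrow>
          measure \<mu> (B \<times> F) = integral\<^sup>L lborel (\<lambda>v. indicator F v * (indicator {0..1} v * measure (K v) B))"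
proof -
  have m: "(\<lambda>v. measure (K v) B) \<in> borel_measurable (restrict_space borel {0..1})"
    using mk B unfolding markov_kernel_of_def by blast
  show meas: "(\<lambda>v. indicator {0..1} v * measure (K v) B) \<in> borel_measurable lborel"
    using m by (subst (asm) borel_measurable_restrict_space_iff) (auto simp: measurable_lborel1)
  show bnd: "\<And>v. \<bar>indicator {0..1} v * measure (K v) B\<bar> \<le> 1"
  proof -
    fix v :: real
    show "\<bar>indicator {0..1} v * measure (K v) B\<bar> \<le> 1"
    proof (cases "v \<in> {0..1}")
      case True
      then have "prob_space (K v)" using mk unfolding markov_kernel_of_def by blast
      then show ?thesis using True by (simp add: prob_space.prob_le_1)
    qed simp
  qed
  fix F :: "real set" assume F: "F \<in> sets borel" "F \<subseteq> {0..1}"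
  have "emeasure lborel F \<le> emeasure lborel {0..1::real}"
    using F by (intro emeasure_mono) auto
  then have fin: "emeasure lborel F < \<infinity>" by (simp add: order.strict_trans1)
  show int: "integrable lborel (\<lambda>v. indicator F v * (indicator {0..1} v * measure (K v) B))"
    using integrableI_bounded_set_indicator[of F lborel "\<lambda>v. indicator {0..1} v * measure (K v) B" 1]
      F fin meas bnd by simp
  have "measure \<mu> (B \<times> F) = (LINT v:F|lborel. measure (K v) B)"
    using mk B F unfolding markov_kernel_of_def by blast
  also have "\<dots> = integral\<^sup>L lborel (\<lambda>v. indicator F v * (indicator {0..1} v * measure (K v) B))"
    unfolding set_lebesgue_integral_def
    by (rule Bochner_Integration.integral_cong) (use F in \<open>auto simp: indicator_def\<close>)
  finally show "measure \<mu> (B \<times> F) = integral\<^sup>L lborel (\<lambda>v. indicator F v * (indicator {0..1} v * measure (K v) B))" .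
qed

lemma TV_facts:
  fixes \<mu>1 \<mu>2 :: "((real^'m::finite) \<times> real) measure"
  assumes "prob_space \<mu>1" "prob_space \<mu>2" "sets \<mu>1 = sets borel" "sets \<mu>2 = sets borel"
  shows "\<And>G. G \<in> sets borel \<Longrightarrow> \<bar>measure \<mu>1 G - measure \<mu>2 G\<bar> \<le> TV \<mu>1 \<mu>2"
    and "0 \<le> TV \<mu>1 \<mu>2"
proof -
  have bdd: "bdd_above ((\<lambda>G. \<bar>measure \<mu>1 G - measure \<mu>2 G\<bar>) ` sets borel)"
  proof (rule bdd_aboveI2)
    fix G
    have "measure \<mu>1 G \<le> 1" "measure \<mu>2 G \<le> 1"
      using assms by (auto simp: prob_space.prob_le_1)
    then show "\<bar>measure \<mu>1 G - measure \<mu>2 G\<bar> \<le> 1"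
      using measure_nonneg[of \<mu>1 G] measure_nonneg[of \<mu>2 G] by linarith
  qed
  show "\<And>G. G \<in> sets borel \<Longrightarrow> \<bar>measure \<mu>1 G - measure \<mu>2 G\<bar> \<le> TV \<mu>1 \<mu>2"
    unfolding TV_def by (rule cSUP_upper[OF _ bdd])
  have "\<bar>measure \<mu>1 {} - measure \<mu>2 {}\<bar> \<le> TV \<mu>1 \<mu>2"
    unfolding TV_def by (rule cSUP_upper[OF _ bdd]) simp
  then show "0 \<le> TV \<mu>1 \<mu>2" by simp
qed

lemma inner_bound:
  fixes \<mu>1 \<mu>2 :: "((real^'m::finite) \<times> real) measure"
    and K1 K2 :: "real \<Rightarrow> (real^'m::finite) measure"
  assumes p: "prob_space \<mu>1" "prob_space \<mu>2" "sets \<mu>1 = sets borel" "sets \<mu>2 = sets borel"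
    and mk1: "markov_kernel_of \<mu>1 K1" and mk2: "markov_kernel_of \<mu>2 K2"
    and B: "B \<in> sets borel"
  shows "(LINT v:{0..1}|lborel. \<bar>measure (K1 v) B - measure (K2 v) B\<bar>) \<le> 2 * TV \<mu>1 \<mu>2"
proof -
  define g1 where "g1 v = indicator {0..1} v * measure (K1 v) B" for v :: real
  define g2 where "g2 v = indicator {0..1} v * measure (K2 v) B" for v :: real
  note f1 = kernel_facts[OF mk1 B, folded g1_def]
  note f2 = kernel_facts[OF mk2 B, folded g2_def]
  define Fp where "Fp = {v\<in>{0..1::real}. g2 v \<le> g1 v}"
  define Fm where "Fm = {v\<in>{0..1::real}. g1 v < g2 v}"
  have Fp: "Fp \<in> sets borel" "Fp \<subseteq> {0..1}"
  proof -
    have "{v\<in>space lborel. g2 v \<le> g1 v} \<in> sets lborel"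
      using f1(1) f2(1) by measurable
    then have "{v. g2 v \<le> g1 v} \<in> sets borel" by simp
    then show "Fp \<in> sets borel" unfolding Fp_def
      using sets.Int[of "{0..1::real}" borel "{v. g2 v \<le> g1 v}"]
      by (simp add: Collect_conj_eq Int_commute set_eq_iff) 
    show "Fp \<subseteq> {0..1}" unfolding Fp_def by auto
  qed
  have Fm: "Fm \<in> sets borel" "Fm \<subseteq> {0..1}"
  proof -
    have "{v\<in>space lborel. g1 v < g2 v} \<in> sets lborel"
      using f1(1) f2(1) by measurable
    then have "{v. g1 v < g2 v} \<in> sets borel" by simp
    then show "Fm \<in> sets borel" unfolding Fm_def
      using sets.Int[of "{0..1::real}" borel "{v. g1 v < g2 v}"]
      by (simp add: Collect_conj_eq Int_commute set_eq_iff) 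
    show "Fm \<subseteq> {0..1}" unfolding Fm_def by auto
  qed
  have BF: "B \<times> F \<in> sets borel" if "F \<in> sets (borel :: real measure)" for F
    by (subst borel_prod[symmetric]) (rule pair_measureI[OF B that])
  have "(LINT v:{0..1}|lborel. \<bar>measure (K1 v) B - measure (K2 v) B\<bar>)
      = integral\<^sup>L lborel (\<lambda>v. (indicator Fp v * g1 v - indicator Fp v * g2 v)
                             - (indicator Fm v * g1 v - indicator Fm v * g2 v))"
    unfolding set_lebesgue_integral_def
    by (rule Bochner_Integration.integral_cong)
       (auto simp: Fp_def Fm_def g1_def g2_def indicator_def)
  also have "\<dots> = (integral\<^sup>L lborel (\<lambda>v. indicator Fp v * g1 v) - integral\<^sup>L lborel (\<lambda>v. indicator Fp v * g2 v))
      - (integral\<^sup>L lborel (\<lambda>v. indicator Fm v * g1 v) - integral\<^sup>L lborel (\<lambda>v. indicator Fm v * g2 v))"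
    using f1(3)[OF Fp] f2(3)[OF Fp] f1(3)[OF Fm] f2(3)[OF Fm] by simp
  also have "\<dots> = (measure \<mu>1 (B \<times> Fp) - measure \<mu>2 (B \<times> Fp)) - (measure \<mu>1 (B \<times> Fm) - measure \<mu>2 (B \<times> Fm))"
    using f1(4)[OF Fp] f2(4)[OF Fp] f1(4)[OF Fm] f2(4)[OF Fm] by simp
  also have "\<dots> \<le> TV \<mu>1 \<mu>2 + TV \<mu>1 \<mu>2"
    using TV_facts(1)[OF p, OF BF[OF Fp(1)]] TV_facts(1)[OF p, OF BF[OF Fm(1)]] by linarith
  finally show ?thesis by simp
qed

lemma one_inner_Basis: "i \<in> Basis \<Longrightarrow> (1::real^'m::finite) \<bullet> i = 1"
  by (auto simp: Basis_vec_def inner_axis)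

lemma part1:
  fixes \<mu>1 \<mu>2 :: "((real^'m::finite) \<times> real) measure"
    and K1 K2 :: "real \<Rightarrow> (real^'m::finite) measure"
  assumes "copula_measure \<mu>1" and "copula_measure \<mu>2"
    and mk1: "markov_kernel_of \<mu>1 K1" and mk2: "markov_kernel_of \<mu>2 K2"
  shows "0 \<le> D1 K1 K2 \<and> D1 K1 K2 \<le> Dinf K1 K2 \<and> Dinf K1 K2 \<le> 2 * TV \<mu>1 \<mu>2"
proof -
  have p: "prob_space \<mu>1" "prob_space \<mu>2" "sets \<mu>1 = sets borel" "sets \<mu>2 = sets borel"
    using assms unfolding copula_measure_def by auto
  define \<phi> where "\<phi> u = (LINT v:{0..1}|lborel. \<bar>measure (K1 v) (cbox 0 u) - measure (K2 v) (cbox 0 u)\<bar>)"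
    for u :: "real^'m"
  have phi_le: "\<phi> u \<le> 2 * TV \<mu>1 \<mu>2" for u
    unfolding \<phi>_def by (rule inner_bound[OF p mk1 mk2]) simp
  have phi_ge: "0 \<le> \<phi> u" for u
    unfolding \<phi>_def set_lebesgue_integral_def by (rule Bochner_Integration.integral_nonneg) simp
  have ne: "cbox 0 (1::real^'m) \<noteq> {}"
    by (simp add: box_ne_empty one_inner_Basis)
  have bdd: "bdd_above (\<phi> ` cbox 0 1)"
    using phi_le by (intro bdd_aboveI2) 
  have Dinf_eq: "Dinf K1 K2 = (SUP u\<in>cbox 0 1. \<phi> u)"
    unfolding Dinf_def \<phi>_def ..
  have upper: "\<phi> u \<le> Dinf K1 K2" if "u \<in> cbox 0 1" for u
    unfolding Dinf_eq by (rule cSUP_upper[OF that bdd])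
  have D2: "Dinf K1 K2 \<le> 2 * TV \<mu>1 \<mu>2"
    unfolding Dinf_eq by (rule cSUP_least[OF ne phi_le])
  have Dpos: "0 \<le> Dinf K1 K2"
    using upper[of 0] phi_ge[of 0] ne by (auto simp: mem_box one_inner_Basis)
  have D1eq: "D1 K1 K2 = (LINT u:cbox 0 1|lborel. \<phi> u)"
    unfolding D1_def \<phi>_def ..
  have fin: "emeasure lborel (cbox 0 (1::real^'m)) \<noteq> \<infinity>" using emeasure_bounded_finite[OF bounded_cbox[of "0::real^'m" 1]] by (simp add: less_top)
  have D1pos: "0 \<le> D1 K1 K2"
    unfolding D1eq set_lebesgue_integral_def by (rule Bochner_Integration.integral_nonneg) (simp add: phi_ge)
  have D12: "D1 K1 K2 \<le> Dinf K1 K2"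
  proof (cases "set_integrable lborel (cbox 0 1) \<phi>")
    case True
    have ci: "set_integrable lborel (cbox 0 (1::real^'m)) (\<lambda>_. Dinf K1 K2)"
      unfolding set_integrable_def
      by (rule integrableI_bounded_set_indicator[where B="\<bar>Dinf K1 K2\<bar>"]) (use fin in \<open>auto simp: less_top[symmetric]\<close>)
    have "D1 K1 K2 \<le> (LINT u:cbox 0 (1::real^'m)|lborel. Dinf K1 K2)"
      using set_integral_mono[of lborel "cbox 0 1" \<phi> "\<lambda>_. Dinf K1 K2", OF True ci upper] by (simp add: D1eq)
    also have "\<dots> = measure lborel (cbox 0 (1::real^'m)) * Dinf K1 K2"
      using set_integral_const[OF _ fin, of "Dinf K1 K2"] by simp
    also have "measure lborel (cbox 0 (1::real^'m)) = 1"
      by (simp add: measure_lborel_cbox_eq one_inner_Basis)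
    finally show ?thesis by simp
  next
    case False
    then have "D1 K1 K2 = 0" unfolding D1eq set_lebesgue_integral_def set_integrable_def
      by (simp add: not_integrable_integral_eq)
    then show ?thesis using Dpos by simp
  qed
  show ?thesis using D1pos D12 D2 by simp
qed

theorem theorem2p3:
  fixes \<mu>1 \<mu>2 :: "((real^'m::finite) \<times> real) measure"
    and K1 K2 :: "real \<Rightarrow> (real^'m::finite) measure"
  assumes "copula_measure \<mu>1" and "copula_measure \<mu>2"
    and "markov_kernel_of \<mu>1 K1" and "markov_kernel_of \<mu>2 K2"
  shows "(D1 K1 K2 \<le> Dinf K1 K2 \<and> Dinf K1 K2 \<le> 2 * TV \<mu>1 \<mu>2) \<and>
         (\<forall>(\<mu>s :: nat \<Rightarrow> ((real^'m::finite) \<times> real) measure) Ks \<mu> K.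
           (\<forall>n. copula_measure (\<mu>s n) \<and> markov_kernel_of (\<mu>s n) (Ks n)) \<longrightarrow>
           copula_measure \<mu> \<longrightarrow> markov_kernel_of \<mu> K \<longrightarrow>
           (\<lambda>n. TV (\<mu>s n) \<mu>) \<longlonglongrightarrow> 0 \<longrightarrow>
           ((\<lambda>n. D1 (Ks n) K) \<longlonglongrightarrow> 0 \<and> (\<lambda>n. Dinf (Ks n) K) \<longlonglongrightarrow> 0))"
proof (intro conjI allI impI)
  show "D1 K1 K2 \<le> Dinf K1 K2" "Dinf K1 K2 \<le> 2 * TV \<mu>1 \<mu>2"
    using part1[OF assms] by auto
next
  fix \<mu>s :: "nat \<Rightarrow> ((real^'m::finite) \<times> real) measure" and Ks \<mu> K
  assume h: "\<forall>n. copula_measure (\<mu>s n) \<and> markov_kernel_of (\<mu>s n) (Ks n)"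
    and c: "copula_measure \<mu>" and k: "markov_kernel_of \<mu> K"
    and t: "(\<lambda>n. TV (\<mu>s n) \<mu>) \<longlonglongrightarrow> 0"
  have P: "0 \<le> D1 (Ks n) K \<and> D1 (Ks n) K \<le> Dinf (Ks n) K \<and> Dinf (Ks n) K \<le> 2 * TV (\<mu>s n) \<mu>" for n
    using part1[of "\<mu>s n" \<mu> "Ks n" K] h c k by blast
  have Dq: "D1 (Ks n) K \<le> 2 * TV (\<mu>s n) \<mu>" for n using P[of n] by linarith
  have Dp: "0 \<le> Dinf (Ks n) K" for n using P[of n] by linarith
  have t2: "(\<lambda>n. 2 * TV (\<mu>s n) \<mu>) \<longlonglongrightarrow> 0"
    using tendsto_mult_right_zero[OF t, of 2] by simp
  show "(\<lambda>n. Dinf (Ks n) K) \<longlonglongrightarrow> 0"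
    by (rule real_tendsto_sandwich[where f="\<lambda>_. 0" and h="\<lambda>n. 2 * TV (\<mu>s n) \<mu>"])
       (use P Dp Dq t2 in \<open>auto intro: order_trans\<close>)
  show "(\<lambda>n. D1 (Ks n) K) \<longlonglongrightarrow> 0"
    by (rule real_tendsto_sandwich[where f="\<lambda>_. 0" and h="\<lambda>n. 2 * TV (\<mu>s n) \<mu>"])
       (use P Dp Dq t2 in \<open>auto intro: order_trans\<close>)
qed

end
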